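(* Let $Y_1,\ldots,Y_n$ be i.i.d. Bernoulli with parameter $p=\mathbb{P}[Y_\ell=1]\in[0,\tfrac12]$, and let $\hat p(n)=\frac1n\sum_{\ell=1}^n\mathbb{1}\{Y_\ell=1\}$. Let $\delta\in(0,\tfrac12]$. If $n\geq 200\log(\frac4\delta)$, then with probability larger than $1-\delta$, \[ |h_b(\hat p(n))-h_b(p)|\leq \mathrm{UCD}_{\mathrm{ber}}(\hat p(n),\delta,n), \] where \[ \mathrm{UCD}_{\mathrm{ber}}(q,\delta,n):=\sqrt{\frac{12q\log(\frac6\delta)}{n}}\log\Bigl(\frac{n}{q\log(\frac6\delta)}\Bigr)+\frac{18\log(\frac6\delta)\log(n)}{n}, \] with the first term interpreted as $0$ when $q=0$.
   Context: $h_b(p):=-p\log p-(1-p)\log(1-p)$ is the binary entropy function (natural logarithm, $0\log 0=0$). *)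

theory Defs
  imports "HOL-Probability.Probability"
begin

text \<open>Binary entropy with natural logarithm (0 log 0 = 0 holds since 0 * _ = 0).\<close>
definition hb :: "real \<Rightarrow> real" where
  "hb p = - p * ln p - (1 - p) * ln (1 - p)"

definition UCD_ber :: "real \<Rightarrow> real \<Rightarrow> nat \<Rightarrow> real" where
  "UCD_ber q \<delta> n =
     (if q = 0 then 0
      else sqrt (12 * q * ln (6 / \<delta>) / real n) * ln (real n / (q * ln (6 / \<delta>))))
     + 18 * ln (6 / \<delta>) * ln (real n) / real n"

definition phat :: "nat \<Rightarrow> (nat \<Rightarrow> bool) \<Rightarrow> real" where
  "phat n Y = (1 / real n) * (\<Sum>l\<in>{1..n}. if Y l then 1 else 0)"

end

theory Submission
  imports Defs
begin


definition cnt :: "nat \<Rightarrow> (nat \<Rightarrow> bool) \<Rightarrow> real" where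
  "cnt n Y = (\<Sum>l\<in>{1..n}. if Y l then 1 else 0)"

lemma finite_set_Pi_bern: "finite (set_pmf (Pi_pmf {1..(n::nat)} False (\<lambda>_. bernoulli_pmf p)))"
  by (subst set_Pi_pmf) (auto intro!: finite_PiE_dflt)
lemma chernoff:
  fixes lam c p :: real assumes p: "0\<le>p" "p\<le>1"
  shows "measure_pmf.prob (Pi_pmf {1..n} False (\<lambda>_. bernoulli_pmf p)) {Y. c \<le> lam * cnt n Y}
     \<le> exp (real n * p * (exp lam - 1) - c)"
proof -
  define M where "M = Pi_pmf {1..n} False (\<lambda>_. bernoulli_pmf p)"
  define A where "A = {Y. c \<le> lam * cnt n Y}"
  have fin: "finite (set_pmf M)" unfolding M_def by (rule finite_set_Pi_bern)
  have "measure_pmf.prob M A = measure_pmf.expectation M (indicator A)" by simp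
  also have "\<dots> \<le> measure_pmf.expectation M (\<lambda>Y. exp (lam * cnt n Y - c))"
  proof (rule integral_mono)
    show "integrable (measure_pmf M) (indicator A :: _ \<Rightarrow> real)" using fin by (rule integrable_measure_pmf_finite)
    show "integrable (measure_pmf M) (\<lambda>Y. exp (lam * cnt n Y - c))" using fin by (rule integrable_measure_pmf_finite)
    fix Y show "indicator A Y \<le> exp (lam * cnt n Y - c)"
      by (auto simp: A_def indicator_def)
  qed
  also have "(\<lambda>Y. exp (lam * cnt n Y - c)) = (\<lambda>Y. exp (-c) * (\<Prod>l\<in>{1..n}. (\<lambda>l b. exp (lam * (if b then 1 else 0))) l (Y l)))"
    by (auto simp: cnt_def sum_distrib_left exp_sum[symmetric] exp_add[symmetric])
  also have "measure_pmf.expectation M \<dots> = exp (-c) * measure_pmf.expectation M (\<lambda>Y. (\<Prod>l\<in>{1..n}. (\<lambda>l b. exp (lam * (if b then 1 else 0))) l (Y l)))"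
    by simp
  also have "measure_pmf.expectation M (\<lambda>Y. (\<Prod>l\<in>{1..n}. (\<lambda>l b. exp (lam * (if b then 1 else 0))) l (Y l)))
     = (\<Prod>l\<in>{1..n}. measure_pmf.expectation (bernoulli_pmf p) (\<lambda>b. exp (lam * (if b then 1 else 0))))"
    unfolding M_def
    by (rule expectation_prod_Pi_pmf) (auto intro: integrable_measure_pmf_finite)
  also have "\<dots> = (1 + p * (exp lam - 1)) ^ n"
    using p by (simp add: algebra_simps)
  also have "\<dots> \<le> exp (p * (exp lam - 1)) ^ n"
  proof (rule power_mono)
    show "1 + p * (exp lam - 1) \<le> exp (p * (exp lam - 1))" by (rule exp_ge_add_one_self)
    have "0 \<le> 1 - p + p * exp lam" using p by (simp add: add_nonneg_nonneg)
    then show "0 \<le> 1 + p * (exp lam - 1)" by (simp add: algebra_simps)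
  qed
  also have "exp (p * (exp lam - 1)) ^ n = exp (real n * p * (exp lam - 1))"
    by (simp add: exp_of_nat_mult[symmetric] mult.assoc)
  finally have "measure_pmf.prob M A \<le> exp (-c) * exp (real n * p * (exp lam - 1))"
    by (simp add: mult_left_mono)
  then show ?thesis unfolding M_def A_def by (simp add: exp_add[symmetric])
qed



lemma P1: fixes x t :: real assumes "0 \<le> x" "0 \<le> t"
  shows "-(x+t)*ln(x+t) \<le> -x*ln x - t*ln t"
proof (cases "x = 0 \<or> t = 0")
  case True then show ?thesis by auto
next
  case False
  then have "x > 0" "t > 0" using assms by auto
  then have "ln x \<le> ln (x+t)" "ln t \<le> ln (x+t)" by auto
  then have "x * ln x \<le> x * ln (x+t)" "t * ln t \<le> t * ln (x+t)" using assms by (auto intro: mult_left_mono)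
  then show ?thesis by (simp add: algebra_simps)
qed

lemma P2: fixes x t :: real assumes "0 \<le> x" "0 \<le> t" "x + t \<le> 1"
  shows "-x*ln x + (x+t)*ln(x+t) \<le> t"
proof (cases "x = 0")
  case True
  then show ?thesis using assms using ln_le_minus_one[of t] by (cases "t = 0") (auto simp: mult_nonneg_nonpos)
next
  case False
  then have x: "x > 0" using assms by auto
  have "ln (x+t) \<le> 0" using x assms by auto
  then have a: "t * ln (x+t) \<le> 0" using assms by (simp add: mult_nonneg_nonpos)
  have "ln ((x+t)/x) \<le> (x+t)/x - 1" using x assms by (intro ln_le_minus_one) auto
  then have "x * ln ((x+t)/x) \<le> x * ((x+t)/x - 1)" using x by (intro mult_left_mono) auto
  also have "\<dots> = t" using x by (simp add: field_simps)
  also have "ln ((x+t)/x) = ln (x+t) - ln x" using x assms by (simp add: ln_div)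
  finally have "x * (ln (x+t) - ln x) \<le> t" .
  then show ?thesis using a by (simp add: algebra_simps)
qed

lemma hb_cont: fixes a b :: real assumes "0 \<le> a" "a \<le> b" "b \<le> 1"
  shows "\<bar>hb b - hb a\<bar> \<le> (b-a) - (b-a)*ln(b-a)"
proof -
  define t where "t = b - a"
  have t: "0 \<le> t" "b = a + t" using assms by (auto simp: t_def)
  have e1: "-b*ln b \<le> -a*ln a - t*ln t" using P1[of a t] assms t by simp
  have e2: "-(1-b)*ln(1-b) + (1-a)*ln(1-a) \<le> t" using P2[of "1-b" t] assms t by simp
  have e3: "-(1-a)*ln(1-a) \<le> -(1-b)*ln(1-b) - t*ln t" using P1[of "1-b" t] assms t by simp
  have e4: "-a*ln a + b*ln b \<le> t" using P2[of a t] assms t by simp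
  show ?thesis unfolding hb_def t_def[symmetric] using e1 e2 e3 e4 by (simp add: abs_le_iff algebra_simps)
qed

lemma f_mono: fixes s t :: real assumes "0 \<le> s" "s \<le> t" "t \<le> 1"
  shows "s - s*ln s \<le> t - t*ln t"
proof (cases "s = 0")
  case True
  then show ?thesis using assms using ln_le_minus_one[of t] by (cases "t=0") (auto simp: mult_nonneg_nonpos)
next
  case False
  then have s: "s > 0" using assms by auto
  have "ln (t/s) \<le> t/s - 1" using s assms by (intro ln_le_minus_one) auto
  then have "s * ln (t/s) \<le> s * (t/s - 1)" using s by (intro mult_left_mono) auto
  also have "\<dots> = t - s" using s by (simp add: field_simps)
  also have "ln (t/s) = ln t - ln s" using s assms by (simp add: ln_div)
  finally have 1: "s * (ln t - ln s) \<le> t - s" .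
  have "ln t \<le> 0" using s assms by auto
  then have 2: "(t - s) * ln t \<le> 0" using assms by (simp add: mult_nonneg_nonpos)
  have "t - t*ln t - (s - s*ln s) = (t-s) - s*(ln t - ln s) - (t-s)*ln t" by (simp add: algebra_simps)
  then show ?thesis using 1 2 by linarith
qed

lemma f_sub: fixes A B :: real assumes "0 \<le> A" "0 \<le> B"
  shows "(A+B) - (A+B)*ln(A+B) \<le> (A - A*ln A) + (B - B*ln B)"
  using P1[OF assms] by (simp add: algebra_simps)



lemma conv: fixes p q e :: real assumes "0\<le>p" "0\<le>q" "0<e" "\<bar>q-p\<bar> \<le> 2* sqrt(p*e) + 2*e"
  shows "\<bar>q-p\<bar> \<le> 2* sqrt(q*e) + 8*e"
proof (cases "p \<le> q")
  case True
  have "sqrt (p*e) \<le> sqrt (q*e)" using True assms by (intro real_sqrt_le_mono mult_right_mono) auto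
  then show ?thesis using assms by linarith
next
  case False
  define s x y where "s = sqrt e" and "x = sqrt p" and "y = sqrt q"
  have s0: "s > 0" "x \<ge> 0" "y \<ge> 0" using assms by (auto simp: s_def x_def y_def)
  have sq: "s^2 = e" "x^2 = p" "y^2 = q" using assms by (auto simp: s_def x_def y_def)
  have pe: "sqrt (p*e) = x* s" "sqrt (q*e) = y* s" by (auto simp: s_def x_def y_def real_sqrt_mult)
  have h: "x^2 - y^2 \<le> 2*x* s + 2* s^2" using assms False pe sq by auto
  have xb: "x \<le> y + 3* s"
  proof (rule ccontr)
    assume "\<not> ?thesis"
    then have "x - s > y + 2* s" by simp
    moreover have "y + 2* s \<ge> 0" using s0 by simp
    ultimately have "(x-s)^2 > (y+2* s)^2" by (intro power_strict_mono) auto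
    moreover have "(x-s)^2 = x*x - 2*(x * s) + s * s" by (simp add: power2_eq_square algebra_simps)
    moreover have "(y+2* s)^2 = y*y + 4*(y * s) + 4*(s * s)" by (simp add: power2_eq_square algebra_simps)
    moreover have "x^2 - y^2 = x*x - y*y" by (simp add: power2_eq_square)
    moreover have "2*x* s + 2* s^2 = 2*(x * s) + 2*(s * s)" by (simp add: power2_eq_square)
    moreover have "y * s \<ge> 0" "s * s > 0" using s0 by auto
    ultimately show False using h by linarith
  qed
  then have "2*x* s \<le> 2*(y+3* s)* s" using s0 by (intro mult_right_mono) auto
  then show ?thesis using h False pe sq assms by (simp add: power2_eq_square algebra_simps)
qed

lemma key: fixes p q e N :: real
  assumes "0\<le>p" "p\<le>1" "0\<le>q" "q\<le>1" "0<e" "e\<le>3/400" "1\<le>N" "-ln e \<le> ln N"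
    "\<bar>q-p\<bar> \<le> 2* sqrt(q*e) + 8*e"
  shows "\<bar>hb q - hb p\<bar> \<le> (if q=0 then 0 else sqrt(12*q*e) * (-ln(q*e))) + 18*e*ln N"
proof -
  define A B t where "A = 2* sqrt(q*e)" "B = 8*e" "t = \<bar>q-p\<bar>"
  have A0: "A \<ge> 0" "B > 0" "t \<ge> 0" using assms by (auto simp: A_B_t_def)
  have "q*e \<le> 1*e" using assms by (intro mult_right_mono) auto
  then have "sqrt (q*e) \<le> sqrt (1/100)" using assms by (intro real_sqrt_le_mono) linarith
  also have "sqrt (1/100) = (1/10::real)" by (simp add: real_sqrt_divide)
  finally have "A \<le> 1/5" unfolding A_B_t_def by simp
  then have AB1: "A + B \<le> 1" using assms by (simp add: A_B_t_def)
  have tAB: "t \<le> A + B" using assms by (simp add: A_B_t_def)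
  have "\<bar>hb q - hb p\<bar> \<le> t - t*ln t"
  proof (cases "p \<le> q")
    case True then show ?thesis using hb_cont[of p q] assms by (simp add: A_B_t_def)
  next
    case False then show ?thesis using hb_cont[of q p] assms by (simp add: A_B_t_def abs_minus_commute)
  qed
  also have "\<dots> \<le> (A+B) - (A+B)*ln(A+B)" using f_mono[of t "A+B"] A0 tAB AB1 by simp
  also have "\<dots> \<le> (A - A*ln A) + (B - B*ln B)" using f_sub A0 by simp
  also have "B - B*ln B \<le> 18*e*ln N"
  proof -
    have "exp 1 \<le> (8::real)" using exp_bound[of 1] by simp
    then have "ln (exp 1) \<le> ln (8::real)" by (subst ln_le_cancel_iff) auto
    then have l8: "1 \<le> ln (8::real)" by simp
    have "ln B = ln 8 + ln e" using assms by (simp add: A_B_t_def ln_mult)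
    then have "B - B*ln B = B*(1 - ln 8) + B*(-ln e)" by (simp add: algebra_simps)
    also have "\<dots> \<le> B * (-ln e)" using l8 A0 by (simp add: mult_nonneg_nonpos)
    also have "\<dots> \<le> B * ln N" using assms A0 by (intro mult_left_mono) auto
    also have "\<dots> \<le> 18*e*ln N" using assms by (simp add: A_B_t_def)
    finally show ?thesis .
  qed
  also have "A - A*ln A \<le> (if q=0 then 0 else sqrt(12*q*e) * (-ln(q*e)))"
  proof (cases "q = 0")
    case True then show ?thesis by (simp add: A_B_t_def)
  next
    case False
    define w where "w = q*e"
    have qe: "q*e \<le> 1*e" using assms by (intro mult_right_mono) auto
    have w1: "w > 0" using False assms by (simp add: w_def)
    have w2: "w \<le> 3/400" using assms qe unfolding w_def by linarith
    note w0 = w1 w2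
    have lw: "-ln w \<ge> 397/400" using ln_le_minus_one[of w] w0 by simp
    have "ln A = ln 2 + ln w / 2" using w0 by (simp add: A_B_t_def w_def[symmetric] ln_mult ln_sqrt)
    then have "A - A*ln A = A*(1 - ln 2) + A*(-ln w/2)" by (simp add: algebra_simps)
    also have "\<dots> = A*((1 - ln 2) + (-ln w/2))" by (simp add: algebra_simps)
    also have "\<dots> \<le> A*(1 - ln w/2)" using A0 by (intro mult_left_mono) auto
    also have "\<dots> = sqrt w * (2 - ln w)" by (simp add: A_B_t_def w_def algebra_simps)
    also have "\<dots> \<le> sqrt w * (17/5 * (-ln w))" using lw w0 by (intro mult_left_mono) auto
    also have "\<dots> = (17/5 * sqrt w) * (-ln w)" by simp
    also have "\<dots> \<le> sqrt(12*w) * (-ln w)"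
    proof (intro mult_right_mono)
      have "17/5 = sqrt (289/25::real)" by (simp add: real_sqrt_divide)
      also have "\<dots> \<le> sqrt 12" by simp
      finally have "17/5 * sqrt w \<le> sqrt 12 * sqrt w" using w0 by (intro mult_right_mono) auto
      then show "17/5 * sqrt w \<le> sqrt (12*w)" by (simp add: real_sqrt_mult)
    qed (use lw in auto)
    finally show ?thesis using False by (simp add: w_def mult.assoc)
  qed
  finally show ?thesis by simp
qed


lemma exp_neg_bound: fixes x :: real assumes "0 \<le> x" shows "exp (-x) \<le> 1 - x + x^2"
proof -
  have "1 + x \<le> exp x" by (rule exp_ge_add_one_self)
  have "(1 - x + x^2) * exp x \<ge> (1 - x + x^2) * (1 + x)"
  proof (rule mult_left_mono)
    show "1 + x \<le> exp x" by (rule exp_ge_add_one_self)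
    have "0 \<le> (x - 1/2)^2 + 3/4" by simp
    then show "0 \<le> 1 - x + x^2" by (simp add: power2_eq_square algebra_simps)
  qed
  also have "(1 - x + x^2) * (1 + x) = 1 + x^3" by (simp add: power2_eq_square power3_eq_cube algebra_simps)
  finally have "1 + x^3 \<le> (1 - x + x^2) * exp x" .
  moreover have "0 \<le> x^3" using assms by simp
  ultimately have "1 \<le> (1 - x + x^2) * exp x" by linarith
  then show ?thesis by (simp add: exp_minus field_simps)
qed

lemma cnt_bounds: "0 \<le> cnt n Y" "cnt n Y \<le> real n"
proof -
  show "0 \<le> cnt n Y" unfolding cnt_def by (intro sum_nonneg) auto
  have "cnt n Y \<le> of_nat (card {1..n}) * 1" unfolding cnt_def by (intro sum_bounded_above) auto
  then show "cnt n Y \<le> real n" by simp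
qed

lemma upper_tail:
  fixes p L :: real assumes p: "0\<le>p" "p\<le>1" and L: "0 < L"
  shows "measure_pmf.prob (Pi_pmf {1..n} False (\<lambda>_. bernoulli_pmf p))
     {Y. real n * p + (2 * sqrt (real n * p * L) + 2*L) \<le> cnt n Y} \<le> exp (-L)"
proof -
  define N where "N = real n"
  define u where "u = 2 * sqrt (N * p * L) + 2*L"
  have N0: "N \<ge> 0" by (simp add: N_def)
  have u2: "u \<ge> 2*L" using N0 p L by (simp add: u_def)
  show ?thesis
  proof (cases "N * p \<le> L")
    case True
    have "measure_pmf.prob (Pi_pmf {1..n} False (\<lambda>_. bernoulli_pmf p)) {Y. N*p + u \<le> 1 * cnt n Y}
       \<le> exp (N * p * (exp 1 - 1) - (N*p+u))" using chernoff[OF p, of n "N*p+u" 1] by (simp add: N_def)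
    also have "\<dots> \<le> exp (-L)"
    proof -
      have "exp 1 \<le> (3::real)" using exp_bound[of 1] by simp
      then have "N * p * (exp 1 - 1) \<le> N * p * 2" using N0 p by (intro mult_left_mono) auto
      then show ?thesis using True u2 by simp
    qed
    finally show ?thesis by (simp add: N_def u_def)
  next
    case False
    define lam where "lam = sqrt (L / (N*p))"
    have Np: "N * p > 0" using False L by linarith
    have lam0: "0 < lam" "lam \<le> 1" using Np L False by (auto simp: lam_def)
    have Npne: "N*p \<noteq> 0" using Np by linarith
    have lam2: "N*p*lam^2 = L" using Np L Npne by (simp add: lam_def)
    have "lam * sqrt (N*p*L) = sqrt (L / (N*p) * (N*p*L))" unfolding lam_def by (rule real_sqrt_mult[symmetric])
    also have "L / (N*p) * (N*p*L) = L^2" using Npne by (simp add: field_simps power2_eq_square)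
    finally have "lam * sqrt (N*p*L) = sqrt (L^2)" .
    then have "lam * sqrt (N*p*L) = L" using L by simp
    then have lu: "lam * u = 2*L + 2*L*lam" by (simp add: u_def algebra_simps)
    have "measure_pmf.prob (Pi_pmf {1..n} False (\<lambda>_. bernoulli_pmf p)) {Y. N*p + u \<le> cnt n Y}
      \<le> measure_pmf.prob (Pi_pmf {1..n} False (\<lambda>_. bernoulli_pmf p)) {Y. lam*(N*p + u) \<le> lam * cnt n Y}"
      using lam0 by (intro measure_pmf.finite_measure_mono) auto
    also have "\<dots> \<le> exp (N * p * (exp lam - 1) - lam*(N*p+u))" using chernoff[OF p, of n "lam*(N*p+u)" lam] by (simp add: N_def)
    also have "\<dots> \<le> exp (-L)"
    proof -
      have "exp lam - 1 \<le> lam + lam^2" using exp_bound[of lam] lam0 by simp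
      then have "N * p * (exp lam - 1) \<le> N * p * (lam + lam^2)" using Np by (intro mult_left_mono) auto
      moreover have "lam * (N*p+u) = N*p*lam + lam*u" by (simp add: algebra_simps)
      moreover have "N * p * (lam + lam^2) = N*p*lam + N*p*lam^2" by (simp add: algebra_simps)
      moreover have "0 \<le> L*lam" using L lam0 by simp
      ultimately show ?thesis using lam2 lu by simp
    qed
    finally show ?thesis by (simp add: N_def u_def)
  qed
qed

lemma lower_tail:
  fixes p L :: real assumes p: "0\<le>p" "p\<le>1" and L: "0 < L"
  shows "measure_pmf.prob (Pi_pmf {1..n} False (\<lambda>_. bernoulli_pmf p))
     {Y. cnt n Y \<le> real n * p - (2 * sqrt (real n * p * L) + 2*L)} \<le> exp (-L)"
proof -
  define N where "N = real n"
  define u where "u = 2 * sqrt (N * p * L) + 2*L"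
  have N0: "N \<ge> 0" by (simp add: N_def)
  have u2: "u \<ge> 2*L" using N0 p L by (simp add: u_def)
  show ?thesis
  proof (cases "N * p \<le> L")
    case True
    have "{Y. cnt n Y \<le> N * p - u} = {}"
    proof (safe)
      fix Y assume "cnt n Y \<le> N * p - u"
      then show "Y \<in> {}" using True u2 L cnt_bounds(1)[of n Y] by linarith
    qed
    then show ?thesis by (simp add: N_def u_def)
  next
    case False
    define lam where "lam = sqrt (L / (N*p))"
    have Np: "N * p > 0" using False L by linarith
    have Npne: "N*p \<noteq> 0" using Np by linarith
    have lam0: "0 < lam" "lam \<le> 1" using Np L False by (auto simp: lam_def)
    have lam2: "N*p*lam^2 = L" using Np L Npne by (simp add: lam_def)
    have "lam * sqrt (N*p*L) = sqrt (L / (N*p) * (N*p*L))" unfolding lam_def by (rule real_sqrt_mult[symmetric])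
    also have "L / (N*p) * (N*p*L) = L^2" using Npne by (simp add: field_simps power2_eq_square)
    finally have "lam * sqrt (N*p*L) = sqrt (L^2)" .
    then have "lam * sqrt (N*p*L) = L" using L by simp
    then have lu: "lam * u = 2*L + 2*L*lam" by (simp add: u_def algebra_simps)
    have "measure_pmf.prob (Pi_pmf {1..n} False (\<lambda>_. bernoulli_pmf p)) {Y. cnt n Y \<le> N*p - u}
      \<le> measure_pmf.prob (Pi_pmf {1..n} False (\<lambda>_. bernoulli_pmf p)) {Y. lam*(u - N*p) \<le> (-lam) * cnt n Y}"
    proof (intro measure_pmf.finite_measure_mono subsetI, simp_all)
      fix Y assume "cnt n Y \<le> N*p - u"
      then have "lam * cnt n Y \<le> lam * (N*p - u)" using lam0 by (intro mult_left_mono) auto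
      then show "lam*(u - N*p) \<le> - (lam * cnt n Y)" by (simp add: algebra_simps)
    qed
    also have "\<dots> \<le> exp (N * p * (exp (-lam) - 1) - lam*(u - N*p))"
      using chernoff[OF p, of n "lam*(u-N*p)" "-lam"] by (simp add: N_def)
    also have "\<dots> \<le> exp (-L)"
    proof -
      have "exp (-lam) - 1 \<le> -lam + lam^2" using exp_neg_bound[of lam] lam0 by simp
      then have "N * p * (exp (-lam) - 1) \<le> N * p * (-lam + lam^2)" using Np by (intro mult_left_mono) auto
      moreover have "lam * (u - N*p) = lam*u - N*p*lam" by (simp add: algebra_simps)
      moreover have "N * p * (-lam + lam^2) = -(N*p*lam) + N*p*lam^2" by (simp add: algebra_simps)
      moreover have "0 \<le> L*lam" using L lam0 by simp
      ultimately show ?thesis using lam2 lu by simp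
    qed
    finally show ?thesis by (simp add: N_def u_def)
  qed
qed


theorem proposition2:
  fixes p \<delta> :: real and n :: nat
  assumes "0 \<le> p" "p \<le> 1 / 2"
    and "0 < \<delta>" "\<delta> \<le> 1 / 2"
    and "real n \<ge> 200 * ln (4 / \<delta>)"
  shows "measure_pmf.prob (Pi_pmf {1..n} False (\<lambda>_. bernoulli_pmf p))
           {Y. \<bar>hb (phat n Y) - hb p\<bar> \<le> UCD_ber (phat n Y) \<delta> n} > 1 - \<delta>"
proof -
  define M where "M = Pi_pmf {1..n} False (\<lambda>_. bernoulli_pmf p)"
  define N where "N = real n"
  define L where "L = ln (6/\<delta>)"
  define e where "e = L / N"
  define u where "u = 2 * sqrt (N * p * L) + 2*L"
  have p1: "p \<le> 1" using assms by simp
  have "exp 1 \<le> (3::real)" using exp_bound[of 1] by simp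
  moreover have "8 \<le> 4/\<delta>" using assms by (simp add: field_simps)
  ultimately have "exp 1 \<le> 4/\<delta>" by simp
  then have "ln (exp 1) \<le> ln (4/\<delta>)" by (subst ln_le_cancel_iff) (auto simp: assms)
  then have l4: "1 \<le> ln (4/\<delta>)" by simp
  have N200: "N \<ge> 200 * ln (4/\<delta>)" using assms by (simp add: N_def)
  then have N1: "N \<ge> 1" using l4 by simp
  have "ln ((4/\<delta>) * (3/2)) = ln (4/\<delta>) + ln (3/2)" using assms by (intro ln_mult_pos) auto
  moreover have "(4/\<delta>) * (3/2) = 6/\<delta>" by simp
  ultimately have LL: "L = ln (4/\<delta>) + ln (3/2)" unfolding L_def by simp
  have a1: "ln (3/2::real) \<le> 3/2 - 1" by (rule ln_le_minus_one) simp
  have a2: "0 \<le> ln (3/2::real)" by simp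
  have L1: "1 \<le> L" "L \<le> 3/2 * ln (4/\<delta>)" using LL l4 a1 a2 by linarith+
  have e0: "0 < e" using L1 N1 by (simp add: e_def)
  have "e \<le> (3/2 * ln (4/\<delta>)) / (200 * ln (4/\<delta>))" unfolding e_def
    using L1 N200 l4 by (intro frac_le) auto
  also have "\<dots> = 3/400" using l4 by simp
  finally have e1: "e \<le> 3/400" .
  have lnN: "- ln e \<le> ln N"
  proof -
    have "ln e = ln L - ln N" using L1 N1 by (simp add: e_def ln_div)
    moreover have "0 \<le> ln L" using L1 by simp
    ultimately show ?thesis by simp
  qed
  have expL: "exp (-L) = \<delta>/6" using assms by (simp add: L_def exp_minus)
  define Up where "Up = {Y. real n * p + (2 * sqrt (real n * p * L) + 2*L) \<le> cnt n Y}"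
  define Lo where "Lo = {Y. cnt n Y \<le> real n * p - (2 * sqrt (real n * p * L) + 2*L)}"
  define G where "G = {Y. \<bar>hb (phat n Y) - hb p\<bar> \<le> UCD_ber (phat n Y) \<delta> n}"
  have pUp: "measure_pmf.prob M Up \<le> \<delta>/6" unfolding M_def Up_def expL[symmetric]
    using L1 assms by (intro upper_tail) auto
  have pLo: "measure_pmf.prob M Lo \<le> \<delta>/6" unfolding M_def Lo_def expL[symmetric]
    using L1 assms by (intro lower_tail) auto
  have sub: "UNIV - G \<subseteq> Up \<union> Lo"
  proof
    fix Y assume Y: "Y \<in> UNIV - G"
    show "Y \<in> Up \<union> Lo"
    proof (rule ccontr)
      assume nY: "Y \<notin> Up \<union> Lo"
      define q where "q = phat n Y"
      have qc: "q = cnt n Y / N" by (simp add: q_def phat_def cnt_def N_def)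
      have q01: "0 \<le> q" "q \<le> 1" using cnt_bounds[of n Y] N1 by (auto simp: qc N_def)
      have "\<bar>cnt n Y - N*p\<bar> \<le> u" using nY by (auto simp: Up_def Lo_def u_def N_def)
      then have "\<bar>cnt n Y - N*p\<bar> / N \<le> u / N" using N1 by (intro divide_right_mono) auto
      moreover have "\<bar>cnt n Y - N*p\<bar> / N = \<bar>q - p\<bar>" using N1 by (simp add: qc field_simps)
      moreover have sq: "sqrt (N*p*L) = N * sqrt (p * e)"
      proof -
        have "N*p*L = N^2 * (p*e)" using N1 by (simp add: e_def power2_eq_square field_simps)
        moreover have "sqrt (N^2 * (p*e)) = sqrt (N^2) * sqrt (p*e)" by (rule real_sqrt_mult)
        moreover have "sqrt (N^2) = N" using N1 by simp
        ultimately show ?thesis by (simp only:)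
      qed
      moreover have "u / N = 2 * sqrt (p*e) + 2*e"
      proof -
        have "u = 2*(N * sqrt(p*e)) + 2*L" using sq by (simp add: u_def)
        then show ?thesis using N1 by (simp add: e_def add_divide_distrib)
      qed
      ultimately have "\<bar>q - p\<bar> \<le> 2 * sqrt (p*e) + 2*e" by simp
      then have c: "\<bar>q - p\<bar> \<le> 2 * sqrt (q*e) + 8*e" using conv[of p q e] assms q01 e0 by simp
      have k: "\<bar>hb q - hb p\<bar> \<le> (if q=0 then 0 else sqrt(12*q*e) * (-ln(q*e))) + 18*e*ln N"
        using key[OF assms(1) p1 q01 e0 e1 N1 lnN c] .
      have "UCD_ber q \<delta> n = (if q=0 then 0 else sqrt(12*q*e) * (-ln(q*e))) + 18*e*ln N"
      proof (cases "q = 0")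
        case True then show ?thesis by (simp add: UCD_ber_def e_def L_def N_def)
      next
        case False
        have "12 * q * ln (6/\<delta>) / real n = 12*q*e" by (simp add: e_def L_def N_def)
        moreover have "real n / (q * ln (6/\<delta>)) = inverse (q*e)" by (simp add: e_def L_def N_def)
        moreover have "ln (inverse (q*e)) = - ln (q*e)" by (rule ln_inverse)
        moreover have "18 * ln (6/\<delta>) * ln (real n) / real n = 18*e*ln N" by (simp add: e_def L_def N_def)
        ultimately show ?thesis using False unfolding UCD_ber_def by (simp only: if_False)
      qed
      then have "Y \<in> G" using k by (simp add: G_def q_def)
      then show False using Y by simp
    qed
  qed
  have "measure_pmf.prob M (UNIV - G) \<le> measure_pmf.prob M (Up \<union> Lo)"
    using sub by (intro measure_pmf.finite_measure_mono) auto
  also have "\<dots> \<le> measure_pmf.prob M Up + measure_pmf.prob M Lo"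
    by (intro measure_subadditive) (auto simp: measure_pmf.emeasure_eq_measure)
  finally have "measure_pmf.prob M (UNIV - G) \<le> \<delta>/3" using pUp pLo by simp
  moreover have "measure_pmf.prob M (UNIV - G) = 1 - measure_pmf.prob M G"
    using measure_pmf.prob_compl[of G M] by simp
  ultimately have "measure_pmf.prob M G \<ge> 1 - \<delta>/3" by simp
  then show ?thesis using assms by (simp add: M_def G_def)
qed


end
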